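(* Let $\mathbf{u},\mathbf{v}\in\mathbb{R}^2$ be fixed linearly independent unit vectors, and let $D_1\subset\mathbb{R}^2$ be an open disc of radius $r_1$ centered at the origin. Let $\mathbf{f}=(f_1,f_2)$ be a vector field on $\mathbb{R}^2$ with $f_1,f_2\in C^2_c(D_1)$. Then the longitudinal V-line transform satisfies $\mathcal{L}\mathbf{f}\equiv 0$ on $\mathbb{R}^2$ if and only if $\mathbf{f}=\nabla V$ for some scalar function $V$.
   Context: For a function $h$ on $\mathbb{R}^2$ and a unit vector $\mathbf{u}$, the divergent beam transform is $\mathcal{X}_{\mathbf{u}}h(\mathbf{x})=\int_0^\infty h(\mathbf{x}+t\mathbf{u})\,dt$. The longitudinal V-line transform of $\mathbf{f}$ (with respect to the fixed directions $\mathbf{u},\mathbf{v}$) is the function on $\mathbb{R}^2$ given by $\mathcal{L}\mathbf{f}=-\mathcal{X}_{\mathbf{u}}(\mathbf{f}\cdot\mathbf{u})+\mathcal{X}_{\mathbf{v}}(\mathbf{f}\cdot\mathbf{v})$, where $\cdot$ is the Euclidean dot product. *)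

theory Defs
  imports "HOL-Analysis.Analysis"
begin

definition C2 :: "((real^2) \<Rightarrow> real) \<Rightarrow> bool" where
  "C2 g \<longleftrightarrow> (\<exists>(g' :: real^2 \<Rightarrow> ((real^2) \<Rightarrow>\<^sub>L real))
                 (g'' :: real^2 \<Rightarrow> ((real^2) \<Rightarrow>\<^sub>L ((real^2) \<Rightarrow>\<^sub>L real))).
      (\<forall>x. (g has_derivative blinfun_apply (g' x)) (at x)) \<and>
      (\<forall>x. (g' has_derivative blinfun_apply (g'' x)) (at x)) \<and>
      continuous_on UNIV g'')"

definition C2c :: "(real^2) set \<Rightarrow> ((real^2) \<Rightarrow> real) \<Rightarrow> bool" where
  "C2c D g \<longleftrightarrow> C2 g \<and> compact (closure {x. g x \<noteq> 0}) \<and> closure {x. g x \<noteq> 0} \<subseteq> D"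

definition divbeam :: "real^2 \<Rightarrow> ((real^2) \<Rightarrow> real) \<Rightarrow> real^2 \<Rightarrow> real" where
  "divbeam u h x = integral {0..} (\<lambda>t. h (x + t *\<^sub>R u))"

definition LVT :: "real^2 \<Rightarrow> real^2 \<Rightarrow> ((real^2) \<Rightarrow> real^2) \<Rightarrow> real^2 \<Rightarrow> real" where
  "LVT u v f x = - divbeam u (\<lambda>y. f y \<bullet> u) x + divbeam v (\<lambda>y. f y \<bullet> v) x"

end

theory Submission
  imports Defs
begin

lemma decomp:
  fixes u v :: "real^2"
  assumes indep: "\<forall>a b. a *\<^sub>R u + b *\<^sub>R v = 0 \<longrightarrow> a = 0 \<and> b = 0"
    and nu: "norm u = 1" and nv: "norm v = 1"
  shows "\<exists>C>0. \<forall>h::real^2. \<exists>a b. h = a *\<^sub>R u + b *\<^sub>R v \<and> \<bar>a\<bar> + \<bar>b\<bar> \<le> C * norm h"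
proof -
  define d where "d = u$1 * v$2 - u$2 * v$1"
  have d0: "d \<noteq> 0"
  proof
    assume "d = 0"
    have z1: "v$2 *\<^sub>R u + (- u$2) *\<^sub>R v = 0"
      using \<open>d = 0\<close> unfolding d_def by (simp add: vec_eq_iff forall_2 algebra_simps)
    have z2: "v$1 *\<^sub>R u + (- u$1) *\<^sub>R v = 0"
      using \<open>d = 0\<close> unfolding d_def by (simp add: vec_eq_iff forall_2 algebra_simps)
    have "u$2 = 0" using indep[rule_format, OF z1] by simp
    moreover have "u$1 = 0" using indep[rule_format, OF z2] by simp
    ultimately have "u = 0" by (simp add: vec_eq_iff forall_2)
    with nu show False by simp
  qed
  have cb: "\<bar>x$i\<bar> \<le> norm x" for x :: "real^2" and i by (rule component_le_norm_cart)
  show ?thesis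
  proof (rule exI[of _ "4 / \<bar>d\<bar>"], intro conjI allI)
    show "0 < 4 / \<bar>d\<bar>" using d0 by simp
    fix h :: "real^2"
    define a where "a = (h$1 * v$2 - h$2 * v$1) / d"
    define b where "b = (u$1 * h$2 - u$2 * h$1) / d"
    have ad: "a * d = h$1 * v$2 - h$2 * v$1" and bd: "b * d = u$1 * h$2 - u$2 * h$1"
      using d0 unfolding a_def b_def by auto
    have e1: "d * h$1 = d * (a * u$1 + b * v$1)"
    proof -
      have "d * (a * u$1 + b * v$1) = (a*d) * u$1 + (b*d) * v$1" by (simp add: algebra_simps)
      also have "\<dots> = d * h$1" unfolding ad bd by (simp add: d_def algebra_simps)
      finally show ?thesis by linarith
    qed
    have e2: "d * h$2 = d * (a * u$2 + b * v$2)"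
    proof -
      have "d * (a * u$2 + b * v$2) = (a*d) * u$2 + (b*d) * v$2" by (simp add: algebra_simps)
      also have "\<dots> = d * h$2" unfolding ad bd by (simp add: d_def algebra_simps)
      finally show ?thesis by linarith
    qed
    have "h = a *\<^sub>R u + b *\<^sub>R v"
      using e1 e2 d0 by (simp add: vec_eq_iff forall_2)
    moreover have "\<bar>a\<bar> \<le> 2 * norm h / \<bar>d\<bar>"
    proof -
      have "\<bar>h$1 * v$2 - h$2 * v$1\<bar> \<le> \<bar>h$1\<bar> * \<bar>v$2\<bar> + \<bar>h$2\<bar> * \<bar>v$1\<bar>"
        by (simp add: abs_mult[symmetric] abs_triangle_ineq4)
      also have "\<dots> \<le> norm h * 1 + norm h * 1"
        using cb[of h] cb[of v] nv by (intro add_mono mult_mono) auto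
      finally show ?thesis unfolding a_def using d0 by (simp add: divide_right_mono abs_divide)
    qed
    moreover have "\<bar>b\<bar> \<le> 2 * norm h / \<bar>d\<bar>"
    proof -
      have "\<bar>u$1 * h$2 - u$2 * h$1\<bar> \<le> \<bar>h$2\<bar> * \<bar>u$1\<bar> + \<bar>h$1\<bar> * \<bar>u$2\<bar>"
        by (simp add: abs_mult[symmetric] abs_triangle_ineq4 mult.commute)
      also have "\<dots> \<le> norm h * 1 + norm h * 1"
        using cb[of h] cb[of u] nu by (intro add_mono mult_mono) auto
      finally show ?thesis unfolding b_def using d0 by (simp add: divide_right_mono abs_divide)
    qed
    ultimately show "\<exists>a b. h = a *\<^sub>R u + b *\<^sub>R v \<and> \<bar>a\<bar> + \<bar>b\<bar> \<le> 4 / \<bar>d\<bar> * norm h"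
      by (intro exI[of _ a] exI[of _ b]) auto
  qed
qed

lemma deriv_bound1:
  fixes \<phi> \<phi>' :: "real \<Rightarrow> real"
  assumes "\<And>s. \<bar>s\<bar> \<le> \<bar>b\<bar> \<Longrightarrow> (\<phi> has_real_derivative \<phi>' s) (at s)"
    and "\<And>s. \<bar>s\<bar> \<le> \<bar>b\<bar> \<Longrightarrow> \<bar>\<phi>' s\<bar> \<le> \<epsilon>"
  shows "\<bar>\<phi> b - \<phi> 0\<bar> \<le> \<epsilon> * \<bar>b\<bar>"
proof (cases b "0::real" rule: linorder_cases)
  case less
  then obtain z where z: "b < z" "z < 0" "\<phi> 0 - \<phi> b = (0 - b) * \<phi>' z"
    using MVT2[of b 0 \<phi> \<phi>'] assms(1) by force
  have "\<bar>\<phi>' z\<bar> \<le> \<epsilon>" using assms(2) z by auto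
  then show ?thesis using z less by (simp add: abs_mult abs_minus_commute mult.commute)
next
  case greater
  then obtain z where z: "0 < z" "z < b" "\<phi> b - \<phi> 0 = (b - 0) * \<phi>' z"
    using MVT2[of 0 b \<phi> \<phi>'] assms(1) by force
  have "\<bar>\<phi>' z\<bar> \<le> \<epsilon>" using assms(2) z by auto
  then show ?thesis using z greater by (simp add: abs_mult mult.commute)
qed simp


lemma frechet:
  fixes V :: "real^2 \<Rightarrow> real" and F :: "real^2 \<Rightarrow> real^2" and u v :: "real^2"
  assumes indep: "\<forall>a b. a *\<^sub>R u + b *\<^sub>R v = 0 \<longrightarrow> a = 0 \<and> b = 0"
    and nu: "norm u = 1" and nv: "norm v = 1"
    and cu: "continuous_on UNIV (\<lambda>y. F y \<bullet> u)" and cv: "continuous_on UNIV (\<lambda>y. F y \<bullet> v)"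
    and du: "\<And>y s. ((\<lambda>s. V (y + s *\<^sub>R u)) has_real_derivative (F (y + s *\<^sub>R u) \<bullet> u)) (at s)"
    and dv: "\<And>y s. ((\<lambda>s. V (y + s *\<^sub>R v)) has_real_derivative (F (y + s *\<^sub>R v) \<bullet> v)) (at s)"
  shows "(V has_derivative (\<lambda>h. F x \<bullet> h)) (at x)"
proof -
  obtain C where C: "C > 0" and dec: "\<And>h::real^2. \<exists>a b. h = a *\<^sub>R u + b *\<^sub>R v \<and> \<bar>a\<bar> + \<bar>b\<bar> \<le> C * norm h"
    using decomp[OF indep nu nv] by blast
  have "\<exists>d>0. \<forall>y. norm (y - x) < d \<longrightarrow> norm (V y - V x - F x \<bullet> (y - x)) \<le> e * norm (y - x)"
    if e: "e > 0" for e
  proof -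
    define \<epsilon> where "\<epsilon> = e / C"
    have \<epsilon>: "\<epsilon> > 0" using e C by (simp add: \<epsilon>_def)
    obtain d1 where d1: "d1 > 0" "\<And>y. dist y x < d1 \<Longrightarrow> dist (F y \<bullet> u) (F x \<bullet> u) < \<epsilon>"
      using cu \<epsilon> unfolding continuous_on_iff by (metis UNIV_I)
    obtain d2 where d2: "d2 > 0" "\<And>y. dist y x < d2 \<Longrightarrow> dist (F y \<bullet> v) (F x \<bullet> v) < \<epsilon>"
      using cv \<epsilon> unfolding continuous_on_iff by (metis UNIV_I)
    show ?thesis
    proof (rule exI[of _ "min d1 d2 / C"], intro conjI allI impI)
      show "min d1 d2 / C > 0" using d1 d2 C by simp
      fix y assume y: "norm (y - x) < min d1 d2 / C"
      obtain a b where ab: "y - x = a *\<^sub>R u + b *\<^sub>R v" "\<bar>a\<bar> + \<bar>b\<bar> \<le> C * norm (y - x)"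
        using dec by blast
      have sm: "\<bar>a\<bar> + \<bar>b\<bar> < min d1 d2"
        using ab(2) y C by (smt (verit, best) mult.commute pos_less_divide_eq)
      have s1: "\<bar>V (x + a *\<^sub>R u) - V x - a * (F x \<bullet> u)\<bar> \<le> \<epsilon> * \<bar>a\<bar>"
      proof -
        have "\<bar>(V (x + a *\<^sub>R u) - a * (F x \<bullet> u)) - (V (x + 0 *\<^sub>R u) - 0 * (F x \<bullet> u))\<bar> \<le> \<epsilon> * \<bar>a\<bar>"
        proof (rule deriv_bound1[where \<phi>' = "\<lambda>s. F (x + s *\<^sub>R u) \<bullet> u - F x \<bullet> u"])
          fix s :: real
          show "((\<lambda>s. V (x + s *\<^sub>R u) - s * (F x \<bullet> u)) has_real_derivative
                   F (x + s *\<^sub>R u) \<bullet> u - F x \<bullet> u) (at s)"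
            by (auto intro!: derivative_eq_intros du)
          assume "\<bar>s\<bar> \<le> \<bar>a\<bar>"
          then have "dist (x + s *\<^sub>R u) x < d1" using sm nu by (simp add: dist_norm) (smt (verit) abs_ge_zero)
          then show "\<bar>F (x + s *\<^sub>R u) \<bullet> u - F x \<bullet> u\<bar> \<le> \<epsilon>"
            using d1(2) by (simp add: dist_real_def less_imp_le)
        qed
        then show ?thesis by simp
      qed
      have s2: "\<bar>V (x + a *\<^sub>R u + b *\<^sub>R v) - V (x + a *\<^sub>R u) - b * (F x \<bullet> v)\<bar> \<le> \<epsilon> * \<bar>b\<bar>"
      proof -
        have "\<bar>(V (x + a *\<^sub>R u + b *\<^sub>R v) - b * (F x \<bullet> v)) - (V (x + a *\<^sub>R u + 0 *\<^sub>R v) - 0 * (F x \<bullet> v))\<bar> \<le> \<epsilon> * \<bar>b\<bar>"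
        proof (rule deriv_bound1[where \<phi>' = "\<lambda>s. F (x + a *\<^sub>R u + s *\<^sub>R v) \<bullet> v - F x \<bullet> v"])
          fix s :: real
          show "((\<lambda>s. V (x + a *\<^sub>R u + s *\<^sub>R v) - s * (F x \<bullet> v)) has_real_derivative
                   F (x + a *\<^sub>R u + s *\<^sub>R v) \<bullet> v - F x \<bullet> v) (at s)"
            by (auto intro!: derivative_eq_intros dv)
          assume "\<bar>s\<bar> \<le> \<bar>b\<bar>"
          moreover have "norm (a *\<^sub>R u + s *\<^sub>R v) \<le> \<bar>a\<bar> + \<bar>s\<bar>"
            using norm_triangle_ineq[of "a *\<^sub>R u" "s *\<^sub>R v"] nu nv by simp
          ultimately have "dist (x + a *\<^sub>R u + s *\<^sub>R v) x < d2" using sm by (simp add: dist_norm)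
          then show "\<bar>F (x + a *\<^sub>R u + s *\<^sub>R v) \<bullet> v - F x \<bullet> v\<bar> \<le> \<epsilon>"
            using d2(2) by (simp add: dist_real_def less_imp_le)
        qed
        then show ?thesis by simp
      qed
      have yx: "y = x + a *\<^sub>R u + b *\<^sub>R v" using ab(1) by (simp add: algebra_simps)
      have "F x \<bullet> (y - x) = a * (F x \<bullet> u) + b * (F x \<bullet> v)"
        using ab(1) by (simp add: inner_add_right)
      then have "\<bar>V y - V x - F x \<bullet> (y - x)\<bar> \<le> \<epsilon> * \<bar>a\<bar> + \<epsilon> * \<bar>b\<bar>"
        using s1 s2 yx abs_triangle_ineq[of "V (x + a *\<^sub>R u + b *\<^sub>R v) - V (x + a *\<^sub>R u) - b * (F x \<bullet> v)" "V (x + a *\<^sub>R u) - V x - a * (F x \<bullet> u)"] by (simp add: algebra_simps)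
      also have "\<dots> \<le> \<epsilon> * (C * norm (y - x))"
        using ab(2) \<epsilon> by (simp add: distrib_left[symmetric])
      also have "\<dots> = e * norm (y - x)" using C by (simp add: \<epsilon>_def)
      finally show "norm (V y - V x - F x \<bullet> (y - x)) \<le> e * norm (y - x)" by simp
    qed
  qed
  then show ?thesis
    unfolding has_derivative_at_alt by (simp add: bounded_linear_inner_right)
qed


lemma int_tail:
  fixes h :: "real \<Rightarrow> real"
  assumes "(h has_integral i) {0..M}" "\<And>t. t \<ge> M \<Longrightarrow> h t = 0"
  shows "integral {0..} h = i"
proof -
  have "((\<lambda>t. if t \<in> {0..M} then h t else 0) has_integral i) {0..}"
    using has_integral_restrict[of "{0..M}" "{0..}" h i] assms(1) by auto
  moreover have "\<And>t. t \<in> {0..} \<Longrightarrow> (if t \<in> {0..M} then h t else 0) = h t"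
    using assms(2) by auto
  ultimately have "(h has_integral i) {0..}"
    using has_integral_cong[of "{0..}" "\<lambda>t. if t \<in> {0..M} then h t else 0" h i] by blast
  then show ?thesis by (rule integral_unique)
qed

lemma beam_deriv0:
  fixes g :: "real^2 \<Rightarrow> real" and w y :: "real^2"
  assumes cg: "continuous_on UNIV g" and z: "\<And>y. norm y \<ge> r \<Longrightarrow> g y = 0" and nw: "norm w = 1"
  shows "((\<lambda>s. divbeam w g (y + s *\<^sub>R w)) has_real_derivative - g y) (at 0)"
proof -
  define h where "h t = g (y + t *\<^sub>R w)" for t
  have ch: "continuous_on UNIV h" unfolding h_def
    by (intro continuous_on_compose2[OF cg] continuous_intros) auto
  define N where "N = norm y + \<bar>r\<bar> + 2"
  have hz: "h t = 0" if "t \<ge> N - 1" for t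
  proof -
    have "norm (t *\<^sub>R w) \<le> norm (y + t *\<^sub>R w) + norm y"
      using norm_triangle_ineq4[of "y + t *\<^sub>R w" y] by simp
    then have "norm (y + t *\<^sub>R w) \<ge> r" using that nw N_def by auto
    then show ?thesis unfolding h_def using z by blast
  qed
  have eq: "divbeam w g (y + s *\<^sub>R w) = integral {s..N} h" if s: "s \<in> {-1<..<1}" for s
  proof -
    have "(h \<circ> (+) s) integrable_on {0..N-s}"
      by (intro integrable_continuous_real continuous_on_compose continuous_intros continuous_on_subset[OF ch]) auto
    then have "((h \<circ> (+) s) has_integral integral {s..N} h) {0..N-s}"
      using integral_shift_Icc_real[of 0 "N-s" h s] by (metis add.commute add_0 diff_add_cancel has_integral_integral)
    then have "integral {0..} (h \<circ> (+) s) = integral {s..N} h"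
      by (rule int_tail) (use hz s N_def in auto)
    moreover have "divbeam w g (y + s *\<^sub>R w) = integral {0..} (h \<circ> (+) s)"
      unfolding divbeam_def h_def by (simp add: o_def scaleR_add_left add.assoc)
    ultimately show ?thesis by simp
  qed
  have N2: "N \<ge> 2" unfolding N_def by simp
  have "((\<lambda>s. integral {s..N} h) has_real_derivative - h 0) (at 0 within {-1..N})"
    by (rule integral_has_real_derivative'[OF continuous_on_subset[OF ch]]) (use N2 in auto)
  moreover have "at (0::real) within {-1..N} = at 0"
    by (rule at_within_interior) (use N2 in auto)
  ultimately have "((\<lambda>s. integral {s..N} h) has_real_derivative - h 0) (at 0)" by simp
  then have "((\<lambda>s. divbeam w g (y + s *\<^sub>R w)) has_real_derivative - h 0) (at 0)"
    by (rule has_field_derivative_transform_within_open[where S = "{-1<..<1}"]) (use eq in auto)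
  then show ?thesis unfolding h_def by simp
qed

lemma beam_deriv:
  fixes g :: "real^2 \<Rightarrow> real" and w y :: "real^2"
  assumes cg: "continuous_on UNIV g" and z: "\<And>y. norm y \<ge> r \<Longrightarrow> g y = 0" and nw: "norm w = 1"
  shows "((\<lambda>s. divbeam w g (y + s *\<^sub>R w)) has_real_derivative - g (y + s0 *\<^sub>R w)) (at s0)"
proof -
  have "((\<lambda>s. divbeam w g ((y + s0 *\<^sub>R w) + s *\<^sub>R w)) has_real_derivative - g (y + s0 *\<^sub>R w)) (at 0)"
    by (rule beam_deriv0[OF cg z nw])
  then have "((\<lambda>s. divbeam w g (y + (s + s0) *\<^sub>R w)) has_real_derivative - g (y + s0 *\<^sub>R w)) (at 0)"
    by (simp add: scaleR_add_left algebra_simps)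
  then show ?thesis using DERIV_shift[of "\<lambda>s. divbeam w g (y + s *\<^sub>R w)" _ 0 s0] by simp
qed

lemma beam_grad:
  fixes V :: "real^2 \<Rightarrow> real" and f :: "real^2 \<Rightarrow> real^2" and w x :: "real^2"
  assumes dV: "\<And>x. (V has_derivative (\<lambda>h. f x \<bullet> h)) (at x)"
    and fz: "\<And>y. norm y \<ge> r \<Longrightarrow> f y = 0" and c: "\<And>y. norm y > r \<Longrightarrow> V y = c" and nw: "norm w = 1"
  shows "divbeam w (\<lambda>y. f y \<bullet> w) x = c - V x"
proof -
  define M where "M = norm x + \<bar>r\<bar> + 1"
  have far: "norm (x + t *\<^sub>R w) \<ge> \<bar>r\<bar> + 1" if "t \<ge> M" for t
  proof -
    have "norm (t *\<^sub>R w) \<le> norm (x + t *\<^sub>R w) + norm x"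
      using norm_triangle_ineq4[of "x + t *\<^sub>R w" x] by simp
    then show ?thesis using that nw M_def abs_ge_self[of t] by auto
  qed
  have der: "((\<lambda>t. V (x + t *\<^sub>R w)) has_vector_derivative f (x + t *\<^sub>R w) \<bullet> w) (at t within {0..M})" for t
  proof -
    have "((\<lambda>t. x + t *\<^sub>R w) has_derivative (\<lambda>d. d *\<^sub>R w)) (at t)"
      by (auto intro!: derivative_eq_intros)
    from has_derivative_compose[OF this dV]
    have "((\<lambda>t. V (x + t *\<^sub>R w)) has_derivative (\<lambda>d. d *\<^sub>R (f (x + t *\<^sub>R w) \<bullet> w))) (at t)"
      by (simp add: o_def)
    then show ?thesis unfolding has_vector_derivative_def by (rule has_derivative_at_withinI)
  qed
  have "((\<lambda>t. f (x + t *\<^sub>R w) \<bullet> w) has_integral V (x + M *\<^sub>R w) - V (x + 0 *\<^sub>R w)) {0..M}"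
    by (rule fundamental_theorem_of_calculus) (use der M_def in auto)
  moreover have "V (x + M *\<^sub>R w) = c" using far[of M] c by auto
  ultimately have "integral {0..} (\<lambda>t. f (x + t *\<^sub>R w) \<bullet> w) = c - V x"
  proof (intro int_tail)
    fix t :: real assume "t \<ge> M"
    then have "f (x + t *\<^sub>R w) = 0" using far[of t] fz by auto
    then show "f (x + t *\<^sub>R w) \<bullet> w = 0" by simp
  qed simp
  then show ?thesis unfolding divbeam_def .
qed

lemma V_const:
  fixes V :: "real^2 \<Rightarrow> real" and f :: "real^2 \<Rightarrow> real^2"
  assumes dV: "\<And>x. (V has_derivative (\<lambda>h. f x \<bullet> h)) (at x)"
    and fz: "\<And>y. norm y \<ge> r \<Longrightarrow> f y = 0" and r: "r \<ge> 0"
  shows "\<exists>c. \<forall>y. norm y > r \<longrightarrow> V y = c"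
proof -
  have "V constant_on (- cball 0 r)"
  proof (rule has_derivative_zero_connected_constant_on[where K = "{}"])
    show "connected (- cball (0::real^2) r)"
      by (rule connected_complement_bounded_convex) auto
    show "continuous_on (- cball 0 r) V"
      using dV by (meson continuous_at_imp_continuous_on has_derivative_continuous)
    show "\<forall>x\<in>- cball 0 r - {}. (V has_derivative (\<lambda>h. 0)) (at x within - cball 0 r)"
    proof
      fix x :: "real^2" assume "x \<in> - cball 0 r - {}"
      then have "f x = 0" using fz by auto
      then show "(V has_derivative (\<lambda>h. 0)) (at x within - cball 0 r)"
        using dV[of x] by (simp add: has_derivative_at_withinI)
    qed
  qed auto
  then show ?thesis unfolding constant_on_def by auto
qed


lemma C2c_facts:
  assumes "C2c (ball 0 r) g"
  shows "continuous_on UNIV g" "\<And>y. norm y \<ge> r \<Longrightarrow> g y = 0"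
proof -
  have "C2 g" using assms unfolding C2c_def by (rule conjunct1)
  then have "\<exists>g'. \<forall>x. (g has_derivative blinfun_apply (g' x)) (at x)"
    unfolding C2_def by (elim exE conjE) (rule exI)
  then obtain g' where g': "\<forall>x. (g has_derivative blinfun_apply (g' x)) (at x)"
    by (elim exE)
  show "continuous_on UNIV g"
  proof (intro continuous_at_imp_continuous_on ballI)
    fix x show "isCont g x" using g' by (intro has_derivative_continuous) (erule spec)
  qed
  fix y :: "real^2" assume ny: "norm y \<ge> r"
  have yb: "y \<notin> ball 0 r" using ny by (simp add: mem_ball dist_norm)
  have cl: "closure {x. g x \<noteq> 0} \<subseteq> ball 0 r" using assms unfolding C2c_def by (elim conjE)
  show "g y = 0"
  proof (rule ccontr)
    assume "g y \<noteq> 0"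
    then have "y \<in> closure {x. g x \<noteq> 0}" by (intro subsetD[OF closure_subset]) simp
    with cl yb show False by (meson subsetD)
  qed
qed

lemma inner2: "(a::real^2) \<bullet> b = a$1 * b$1 + a$2 * b$2"
  by (simp add: inner_vec_def sum_2)

theorem theorem1:
  fixes u v :: "real^2" and r1 :: real and f :: "real^2 \<Rightarrow> real^2"
  assumes "norm u = 1" and "norm v = 1"
    and "\<forall>a b. a *\<^sub>R u + b *\<^sub>R v = 0 \<longrightarrow> a = 0 \<and> b = 0"
    and "r1 > 0"
    and "C2c (ball 0 r1) (\<lambda>x. f x $ 1)" and "C2c (ball 0 r1) (\<lambda>x. f x $ 2)"
  shows "(\<forall>x. LVT u v f x = 0) \<longleftrightarrow>
         (\<exists>V :: real^2 \<Rightarrow> real. \<forall>x. (V has_derivative (\<lambda>h. f x \<bullet> h)) (at x))"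
proof -
  note c1 = C2c_facts[OF assms(5)] and c2 = C2c_facts[OF assms(6)]
  have fz: "f y = 0" if "norm y \<ge> r1" for y
    using c1(2)[OF that] c2(2)[OF that] by (simp add: vec_eq_iff forall_2)
  have cont: "continuous_on UNIV (\<lambda>y. f y \<bullet> w)" for w :: "real^2"
    unfolding inner2 by (intro continuous_on_add continuous_on_mult_right c1(1) c2(1))
  have gz: "f y \<bullet> w = 0" if "norm y \<ge> r1" for y w
    using fz[OF that] by simp
  show ?thesis
  proof
    assume L: "\<forall>x. LVT u v f x = 0"
    define V where "V x = - divbeam u (\<lambda>y. f y \<bullet> u) x" for x
    have V2: "V = (\<lambda>x. - divbeam v (\<lambda>y. f y \<bullet> v) x)"
    proof
      fix x
      have "- divbeam u (\<lambda>y. f y \<bullet> u) x + divbeam v (\<lambda>y. f y \<bullet> v) x = 0"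
        using L unfolding LVT_def by blast
      then show "V x = - divbeam v (\<lambda>y. f y \<bullet> v) x" unfolding V_def by linarith
    qed
    have "(V has_derivative (\<lambda>h. f x \<bullet> h)) (at x)" for x
    proof (rule frechet[OF assms(3,1,2) cont cont])
      fix y s
      show "((\<lambda>s. V (y + s *\<^sub>R u)) has_real_derivative f (y + s *\<^sub>R u) \<bullet> u) (at s)"
        unfolding V_def using DERIV_minus[OF beam_deriv[OF cont gz assms(1)]] by simp
      show "((\<lambda>s. V (y + s *\<^sub>R v)) has_real_derivative f (y + s *\<^sub>R v) \<bullet> v) (at s)"
        unfolding V2 using DERIV_minus[OF beam_deriv[OF cont gz assms(2)]] by simp
    qed
    then show "\<exists>V :: real^2 \<Rightarrow> real. \<forall>x. (V has_derivative (\<lambda>h. f x \<bullet> h)) (at x)" by blast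
  next
    assume "\<exists>V :: real^2 \<Rightarrow> real. \<forall>x. (V has_derivative (\<lambda>h. f x \<bullet> h)) (at x)"
    then obtain V :: "real^2 \<Rightarrow> real" where dV: "\<And>x. (V has_derivative (\<lambda>h. f x \<bullet> h)) (at x)" by blast
    have "\<exists>c. \<forall>y. norm y > r1 \<longrightarrow> V y = c"
      by (rule V_const[OF dV fz less_imp_le[OF assms(4)]])
    then obtain c where c: "\<And>y. norm y > r1 \<Longrightarrow> V y = c" by blast
    show "\<forall>x. LVT u v f x = 0"
      unfolding LVT_def
      using beam_grad[OF dV fz c assms(1)] beam_grad[OF dV fz c assms(2)] by simp
  qed
qed

end
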